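(* Let $n\ge1$, $m=2^n$, let $\mathcal{B}$ be the boolean algebra of rank $r\ge1$, and let $A\subseteq\{0,1\}^n$ with $a=|A|$ and $m-a>r$. Let $Y=V_{\mathcal{B}}(S_A)$. For every $B$ with $A\subseteq B\subseteq\{0,1\}^n$ and $|B|=m-r$, put $Y_B=V_{\mathcal{B}}(S_B)$. Then (i) $Y=\bigcup_B Y_B$, the union over all such $B$; (ii) each $Y_B$ is irreducible over $\mathcal{B}$; (iii) $Y_B\not\subseteq Y_{B'}$ whenever $B\ne B'$. Consequently the sets $Y_B$ are exactly the irreducible components of $Y$, and $Y$ has $\binom{m-a}{r}$ irreducible components.
   Context: A finite boolean algebra of rank $r$ is (isomorphic to) the power set algebra of an $r$-element set, in the language $\{\vee,\cdot,\bar{\ },0,1\}$. Orthogonal variables: $Z=\{z_\alpha:\alpha\in\{0,1\}^n\}$, $|Z|=m=2^n$. For $A\subseteq\{0,1\}^n$ the orthogonal system is $$S_A=\{z_\alpha=0\mid\alpha\in A\}\cup\{z_\alpha z_\beta=0\mid \alpha\ne\beta\}\cup\{\textstyle\bigvee_{\alpha}z_\alpha=1\}.$$ $V_{\mathcal{B}}(S)\subseteq\mathcal{B}^m$ is the solution set of $S$. A subset of $\mathcal{B}^m$ is algebraic if it is the solution set of some system of equations $t=s$ ($t,s$ terms in $Z$). A nonempty algebraic set is irreducible if it is not a finite union of proper algebraic subsets. Every algebraic set $Y$ decomposes uniquely (up to order) as $Y=Y_1\cup\dots\cup Y_k$ with $Y_i$ irreducible and $Y_i\not\subseteq Y_j$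 for $i\ne j$; the $Y_i$ are the irreducible components of $Y$. *)

theory Defs
  imports Main "HOL-Library.FuncSet"
begin

datatype 'v bterm = Var 'v | Join "'v bterm" "'v bterm" | Meet "'v bterm" "'v bterm"
  | Compl "'v bterm" | Zero | One

text \<open>Evaluation in the power set algebra of U (the boolean algebra of rank card U).\<close>
primrec eval :: "'a set \<Rightarrow> ('v \<Rightarrow> 'a set) \<Rightarrow> 'v bterm \<Rightarrow> 'a set" where
  "eval U f (Var v) = f v"
| "eval U f (Join t s) = eval U f t \<union> eval U f s"
| "eval U f (Meet t s) = eval U f t \<inter> eval U f s"
| "eval U f (Compl t) = U - eval U f t"
| "eval U f Zero = {}"
| "eval U f One = U"

text \<open>Index set {0,1}^n, encoded as boolean lists of length n.\<close>
definition Idx :: "nat \<Rightarrow> bool list set" where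
  "Idx n = {xs. length xs = n}"

primrec idx_list :: "nat \<Rightarrow> bool list list" where
  "idx_list 0 = [[]]"
| "idx_list (Suc n) = concat (map (\<lambda>x. [False # x, True # x]) (idx_list n))"

definition bigjoin :: "nat \<Rightarrow> bool list bterm" where
  "bigjoin n = foldr Join (map Var (idx_list n)) Zero"

text \<open>The affine space B^m, m = 2^n: tuples indexed by Idx n with entries in Pow U.\<close>
definition space :: "'a set \<Rightarrow> nat \<Rightarrow> (bool list \<Rightarrow> 'a set) set" where
  "space U n = PiE (Idx n) (\<lambda>_. Pow U)"

definition sol :: "'a set \<Rightarrow> nat \<Rightarrow> (bool list bterm \<times> bool list bterm) set
    \<Rightarrow> (bool list \<Rightarrow> 'a set) set" where
  "sol U n E = {f \<in> space U n. \<forall>(t, s) \<in> E. eval U f t = eval U f s}"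

definition algebraic :: "'a set \<Rightarrow> nat \<Rightarrow> (bool list \<Rightarrow> 'a set) set \<Rightarrow> bool" where
  "algebraic U n Y \<longleftrightarrow> (\<exists>E. (\<forall>(t, s) \<in> E. set_bterm t \<subseteq> Idx n \<and> set_bterm s \<subseteq> Idx n)
      \<and> Y = sol U n E)"

definition irreducible_alg :: "'a set \<Rightarrow> nat \<Rightarrow> (bool list \<Rightarrow> 'a set) set \<Rightarrow> bool" where
  "irreducible_alg U n Y \<longleftrightarrow> Y \<noteq> {} \<and> algebraic U n Y \<and>
     \<not> (\<exists>F. finite F \<and> (\<forall>X \<in> F. algebraic U n X \<and> X \<subset> Y) \<and> \<Union>F = Y)"

definition irred_decomp :: "'a set \<Rightarrow> nat \<Rightarrow> (bool list \<Rightarrow> 'a set) set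
    \<Rightarrow> (bool list \<Rightarrow> 'a set) set set \<Rightarrow> bool" where
  "irred_decomp U n Y C \<longleftrightarrow> finite C \<and> (\<forall>X \<in> C. irreducible_alg U n X) \<and> \<Union>C = Y
     \<and> (\<forall>X \<in> C. \<forall>X' \<in> C. X \<noteq> X' \<longrightarrow> \<not> X \<subseteq> X')"

text \<open>The irreducible components: the (unique) irredundant irreducible decomposition.\<close>
definition irreducible_components :: "'a set \<Rightarrow> nat \<Rightarrow> (bool list \<Rightarrow> 'a set) set
    \<Rightarrow> (bool list \<Rightarrow> 'a set) set set" where
  "irreducible_components U n Y = (THE C. irred_decomp U n Y C)"

definition ortho_sys :: "nat \<Rightarrow> bool list set \<Rightarrow> (bool list bterm \<times> bool list bterm) set" where
  "ortho_sys n A =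
     {(Var \<alpha>, Zero) | \<alpha>. \<alpha> \<in> A}
   \<union> {(Meet (Var \<alpha>) (Var \<beta>), Zero) | \<alpha> \<beta>. \<alpha> \<in> Idx n \<and> \<beta> \<in> Idx n \<and> \<alpha> \<noteq> \<beta>}
   \<union> {(bigjoin n, One)}"

end

theory Submission
  imports Defs
begin

lemma set_idx_list: "set (idx_list n) = Idx n"
proof (induction n)
  case 0 then show ?case by (auto simp: Idx_def)
next
  case (Suc n)
  show ?case
  proof
    show "set (idx_list (Suc n)) \<subseteq> Idx (Suc n)" using Suc by (auto simp: Idx_def)
    show "Idx (Suc n) \<subseteq> set (idx_list (Suc n))"
    proof
      fix xs assume "xs \<in> Idx (Suc n)"
      then obtain b ys where xs: "xs = b # ys" "length ys = n" by (cases xs) (auto simp: Idx_def)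
      then have "ys \<in> set (idx_list n)" using Suc by (auto simp: Idx_def)
      then show "xs \<in> set (idx_list (Suc n))" using xs by (cases b) auto
    qed
  qed
qed

lemma eval_foldr: "eval U f (foldr Join (map Var l) Zero) = \<Union> (f ` set l)"
  by (induction l) auto

lemma set_foldr: "set_bterm (foldr Join (map Var l) Zero) = set l"
  by (induction l) auto

lemma eval_bigjoin: "eval U f (bigjoin n) = (\<Union>\<alpha>\<in>Idx n. f \<alpha>)"
  by (simp add: bigjoin_def eval_foldr set_idx_list)

lemma set_bigjoin: "set_bterm (bigjoin n) = Idx n"
  by (simp add: bigjoin_def set_foldr set_idx_list)

lemma ball_ortho: "(\<forall>(t, s)\<in>ortho_sys n B. P t s) \<longleftrightarrow>
   (\<forall>\<alpha>\<in>B. P (Var \<alpha>) Zero) \<and> (\<forall>\<alpha>\<in>Idx n. \<forall>\<beta>\<in>Idx n. \<alpha> \<noteq> \<beta> \<longrightarrow> P (Meet (Var \<alpha>) (Var \<beta>)) Zero)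
   \<and> P (bigjoin n) One"
  unfolding ortho_sys_def by blast

lemma sol_ortho: "f \<in> sol U n (ortho_sys n B) \<longleftrightarrow> f \<in> space U n \<and> (\<forall>\<alpha>\<in>B. f \<alpha> = {})
   \<and> (\<forall>\<alpha>\<in>Idx n. \<forall>\<beta>\<in>Idx n. \<alpha> \<noteq> \<beta> \<longrightarrow> f \<alpha> \<inter> f \<beta> = {}) \<and> (\<Union>\<alpha>\<in>Idx n. f \<alpha>) = U"
  unfolding sol_def ball_ortho by (simp add: eval_bigjoin)

lemma alg_ortho: "B \<subseteq> Idx n \<Longrightarrow> algebraic U n (sol U n (ortho_sys n B))"
  unfolding algebraic_def
  apply (rule exI[of _ "ortho_sys n B"])
  apply (simp only: ball_ortho)
  by (auto simp: set_bigjoin)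

lemma eval_sub: "f \<in> space U n \<Longrightarrow> set_bterm t \<subseteq> Idx n \<Longrightarrow> eval U f t \<subseteq> U"
  by (induction t) (auto simp: space_def)

lemma eval_mem: "u \<in> U \<Longrightarrow> v \<in> U \<Longrightarrow> \<forall>\<alpha>\<in>set_bterm t. (u \<in> f \<alpha> \<longleftrightarrow> v \<in> g \<alpha>)
  \<Longrightarrow> (u \<in> eval U f t \<longleftrightarrow> v \<in> eval U g t)"
  by (induction t) auto

lemma card_Idx: "card (Idx n) = 2 ^ n"
proof -
  have "Idx n = {xs. set xs \<subseteq> (UNIV::bool set) \<and> length xs = n}" by (auto simp: Idx_def)
  then show ?thesis using card_lists_length_eq[of "UNIV::bool set" n] by simp
qed

lemma finite_Idx: "finite (Idx n)"
  using card_Idx[of n] by (metis card.infinite power_not_zero zero_neq_numeral)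


lemma sol_space: "f \<in> sol U n E \<Longrightarrow> f \<in> space U n"
  by (simp add: sol_def)

lemma generic_point:
  assumes B: "B \<subseteq> Idx n" and card: "card (Idx n - B) = card U" and fin: "finite U"
  obtains g where "g \<in> sol U n (ortho_sys n B)"
    and "\<And>X. algebraic U n X \<Longrightarrow> X \<subseteq> sol U n (ortho_sys n B) \<Longrightarrow> g \<in> X \<Longrightarrow> X = sol U n (ortho_sys n B)"
proof -
  let ?C = "Idx n - B"
  have finC: "finite ?C" using finite_Idx by simp
  obtain \<phi> where phi: "bij_betw \<phi> U ?C" using finite_same_card_bij[OF fin finC] card by metis
  have phiC: "\<phi> x \<in> ?C" if "x \<in> U" for x using phi that unfolding bij_betw_def by blast
  define g where "g = restrict (\<lambda>\<alpha>. {x\<in>U. \<phi> x = \<alpha>}) (Idx n)"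
  have gI: "g \<alpha> = {x\<in>U. \<phi> x = \<alpha>}" if "\<alpha> \<in> Idx n" for \<alpha> using that unfolding g_def by simp
  have gin: "g \<in> sol U n (ortho_sys n B)"
    unfolding sol_ortho
  proof (intro conjI)
    show "g \<in> space U n" unfolding space_def g_def by auto
    show "\<forall>\<alpha>\<in>B. g \<alpha> = {}"
    proof
      fix \<alpha> assume a: "\<alpha> \<in> B"
      then have "\<alpha> \<in> Idx n" using B by blast
      then have "g \<alpha> = {x\<in>U. \<phi> x = \<alpha>}" by (rule gI)
      moreover have "\<phi> x \<noteq> \<alpha>" if "x \<in> U" for x using phiC[OF that] a by blast
      ultimately show "g \<alpha> = {}" by blast
    qed
    show "\<forall>\<alpha>\<in>Idx n. \<forall>\<beta>\<in>Idx n. \<alpha> \<noteq> \<beta> \<longrightarrow> g \<alpha> \<inter> g \<beta> = {}" using gI by auto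
    show "(\<Union>\<alpha>\<in>Idx n. g \<alpha>) = U"
    proof
      show "(\<Union>\<alpha>\<in>Idx n. g \<alpha>) \<subseteq> U" using gI by auto
      show "U \<subseteq> (\<Union>\<alpha>\<in>Idx n. g \<alpha>)"
      proof
        fix x assume x: "x \<in> U"
        then have "\<phi> x \<in> Idx n" using phiC by blast
        moreover have "x \<in> g (\<phi> x)" using gI[OF calculation] x by blast
        ultimately show "x \<in> (\<Union>\<alpha>\<in>Idx n. g \<alpha>)" by blast
      qed
    qed
  qed
  have key: "X = sol U n (ortho_sys n B)" if alg: "algebraic U n X"
    and sub: "X \<subseteq> sol U n (ortho_sys n B)" and gX: "g \<in> X" for X
  proof
    show "X \<subseteq> sol U n (ortho_sys n B)" by (fact sub)
    obtain E where Ev: "\<forall>(t, s)\<in>E. set_bterm t \<subseteq> Idx n \<and> set_bterm s \<subseteq> Idx n"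
      and XE: "X = sol U n E" using alg unfolding algebraic_def by blast
    have gE: "\<forall>(t, s)\<in>E. eval U g t = eval U g s" using gX unfolding XE sol_def by blast
    show "sol U n (ortho_sys n B) \<subseteq> X"
    proof
      fix h assume h: "h \<in> sol U n (ortho_sys n B)"
      have hsp: "h \<in> space U n" and hB: "\<forall>\<alpha>\<in>B. h \<alpha> = {}"
        and hd: "\<forall>\<alpha>\<in>Idx n. \<forall>\<beta>\<in>Idx n. \<alpha> \<noteq> \<beta> \<longrightarrow> h \<alpha> \<inter> h \<beta> = {}"
        and hu: "(\<Union>\<alpha>\<in>Idx n. h \<alpha>) = U"
        using h unfolding sol_ortho by blast+
      have "eval U h t = eval U h s" if ts: "(t, s) \<in> E" for t s
      proof -
        have vt: "set_bterm t \<subseteq> Idx n" and vs: "set_bterm s \<subseteq> Idx n" using Ev ts by auto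
        have gts: "eval U g t = eval U g s" using gE ts by auto
        have "u \<in> eval U h t \<longleftrightarrow> u \<in> eval U h s" if u: "u \<in> U" for u
        proof -
          obtain c where c: "c \<in> Idx n" "u \<in> h c" using hu u by blast
          have cB: "c \<notin> B" using hB c by auto
          define v where "v = inv_into U \<phi> c"
          have cC: "c \<in> ?C" using c cB by blast
          have v: "v \<in> U" "\<phi> v = c" using phi cC unfolding v_def bij_betw_def
            by (auto intro: inv_into_into f_inv_into_f)
          have mem: "\<forall>\<alpha>\<in>Idx n. (u \<in> h \<alpha> \<longleftrightarrow> v \<in> g \<alpha>)"
          proof
            fix \<alpha> assume a: "\<alpha> \<in> Idx n"
            have "v \<in> g \<alpha> \<longleftrightarrow> \<alpha> = c" using gI[OF a] v by auto
            moreover have "u \<in> h \<alpha> \<longleftrightarrow> \<alpha> = c"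
            proof
              assume "u \<in> h \<alpha>"
              then have "u \<in> h \<alpha> \<inter> h c" using c by blast
              then show "\<alpha> = c" using hd a c(1) by blast
            next
              assume "\<alpha> = c" then show "u \<in> h \<alpha>" using c by simp
            qed
            ultimately show "u \<in> h \<alpha> \<longleftrightarrow> v \<in> g \<alpha>" by simp
          qed
          have m1: "\<forall>\<alpha>\<in>set_bterm t. (u \<in> h \<alpha> \<longleftrightarrow> v \<in> g \<alpha>)" using mem vt by blast
          have m2: "\<forall>\<alpha>\<in>set_bterm s. (u \<in> h \<alpha> \<longleftrightarrow> v \<in> g \<alpha>)" using mem vs by blast
          have "u \<in> eval U h t \<longleftrightarrow> v \<in> eval U g t" by (rule eval_mem[OF u v(1) m1])
          also have "\<dots> \<longleftrightarrow> v \<in> eval U g s" using gts by simp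
          also have "\<dots> \<longleftrightarrow> u \<in> eval U h s" using eval_mem[OF u v(1) m2] by simp
          finally show ?thesis .
        qed
        moreover have "eval U h t \<subseteq> U" by (rule eval_sub[OF hsp vt])
        moreover have "eval U h s \<subseteq> U" by (rule eval_sub[OF hsp vs])
        ultimately show ?thesis by blast
      qed
      then have "\<forall>(t, s)\<in>E. eval U h t = eval U h s" by blast
      then show "h \<in> X" using hsp unfolding XE sol_def by blast
    qed
  qed
  show ?thesis using that gin key by blast
qed

lemma irred_YB:
  assumes B: "B \<subseteq> Idx n" and card: "card (Idx n - B) = card U" and fin: "finite U"
  shows "irreducible_alg U n (sol U n (ortho_sys n B))"
proof -
  obtain g where g: "g \<in> sol U n (ortho_sys n B)"
    and key: "\<And>X. algebraic U n X \<Longrightarrow> X \<subseteq> sol U n (ortho_sys n B) \<Longrightarrow> g \<in> X \<Longrightarrow> X = sol U n (ortho_sys n B)"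
    using generic_point[OF assms] by metis
  show ?thesis unfolding irreducible_alg_def
  proof (intro conjI)
    show "sol U n (ortho_sys n B) \<noteq> {}" using g by auto
    show "algebraic U n (sol U n (ortho_sys n B))" using alg_ortho[OF B] .
    show "\<not> (\<exists>F. finite F \<and> (\<forall>X\<in>F. algebraic U n X \<and> X \<subset> sol U n (ortho_sys n B)) \<and> \<Union> F = sol U n (ortho_sys n B))"
    proof
      assume "\<exists>F. finite F \<and> (\<forall>X\<in>F. algebraic U n X \<and> X \<subset> sol U n (ortho_sys n B)) \<and> \<Union> F = sol U n (ortho_sys n B)"
      then obtain F where F: "\<forall>X\<in>F. algebraic U n X \<and> X \<subset> sol U n (ortho_sys n B)" "\<Union> F = sol U n (ortho_sys n B)" by blast
      then obtain X where "X \<in> F" "g \<in> X" using g by blast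
      then show False using F key[of X] by blast
    qed
  qed
qed

lemma alg_inter:
  assumes "algebraic U n X" "algebraic U n X'"
  shows "algebraic U n (X \<inter> X')"
proof -
  obtain E where E: "\<forall>(t, s)\<in>E. set_bterm t \<subseteq> Idx n \<and> set_bterm s \<subseteq> Idx n" "X = sol U n E"
    using assms(1) unfolding algebraic_def by blast
  obtain E' where E': "\<forall>(t, s)\<in>E'. set_bterm t \<subseteq> Idx n \<and> set_bterm s \<subseteq> Idx n" "X' = sol U n E'"
    using assms(2) unfolding algebraic_def by blast
  have "X \<inter> X' = sol U n (E \<union> E')" using E(2) E'(2) unfolding sol_def by auto
  moreover have "\<forall>(t, s)\<in>E \<union> E'. set_bterm t \<subseteq> Idx n \<and> set_bterm s \<subseteq> Idx n" using E(1) E'(1) by blast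
  ultimately show ?thesis unfolding algebraic_def by blast
qed

lemma decomp_sub:
  assumes C: "irred_decomp U n Y C" and D: "irred_decomp U n Y D" and X: "X \<in> C"
  shows "\<exists>X'\<in>D. X \<subseteq> X'"
proof (rule ccontr)
  assume no: "\<not> (\<exists>X'\<in>D. X \<subseteq> X')"
  have irr: "irreducible_alg U n X" using C X unfolding irred_decomp_def by blast
  let ?F = "(\<lambda>X'. X \<inter> X') ` D"
  have "finite ?F" using D unfolding irred_decomp_def by blast
  moreover have "\<forall>Z\<in>?F. algebraic U n Z \<and> Z \<subset> X"
  proof
    fix Z assume "Z \<in> ?F"
    then obtain X' where X': "X' \<in> D" "Z = X \<inter> X'" by blast
    have "algebraic U n X'" using D X'(1) unfolding irred_decomp_def irreducible_alg_def by blast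
    moreover have "algebraic U n X" using irr unfolding irreducible_alg_def by blast
    ultimately show "algebraic U n Z \<and> Z \<subset> X" using alg_inter X' no by blast
  qed
  moreover have "\<Union>?F = X" using C D X unfolding irred_decomp_def by blast
  ultimately show False using irr unfolding irreducible_alg_def by blast
qed

lemma decomp_unique:
  assumes C: "irred_decomp U n Y C" and D: "irred_decomp U n Y D"
  shows "C \<subseteq> D"
proof
  fix X assume X: "X \<in> C"
  obtain X' where X': "X' \<in> D" "X \<subseteq> X'" using decomp_sub[OF C D X] by blast
  obtain X'' where X'': "X'' \<in> C" "X' \<subseteq> X''" using decomp_sub[OF D C X'(1)] by blast
  have "X = X''" using C X X'' X' unfolding irred_decomp_def by blast
  then have "X' = X" using X' X'' by (metis subset_antisym)
  then show "X \<in> D" using X' by simp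
qed

theorem lemma2:
  fixes U :: "'a set" and n r :: nat and A :: "bool list set"
  assumes "n \<ge> 1" and "finite U" and "card U = r" and "r \<ge> 1"
    and "A \<subseteq> Idx n" and "2 ^ n - card A > r"
  defines "Y \<equiv> sol U n (ortho_sys n A)"
    and "YB \<equiv> \<lambda>B. sol U n (ortho_sys n B)"
    and "Bs \<equiv> {B. A \<subseteq> B \<and> B \<subseteq> Idx n \<and> card B = 2 ^ n - r}"
  shows "Y = (\<Union>B \<in> Bs. YB B)
    \<and> (\<forall>B \<in> Bs. irreducible_alg U n (YB B))
    \<and> (\<forall>B \<in> Bs. \<forall>B' \<in> Bs. B \<noteq> B' \<longrightarrow> \<not> YB B \<subseteq> YB B')
    \<and> irreducible_components U n Y = YB ` Bs
    \<and> card (irreducible_components U n Y) = (2 ^ n - card A) choose r"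
proof -
  have finI: "finite (Idx n)" by (rule finite_Idx)
  have finA: "finite A" using assms(5) finI finite_subset by blast
  have cA: "card A \<le> 2 ^ n" using card_mono[OF finI assms(5)] card_Idx by simp
  have r_le: "r \<le> 2 ^ n" using assms(6) by linarith
  have Une: "U \<noteq> {}" using assms(3,4) by auto
  have cardC: "card (Idx n - B) = r" if "B \<in> Bs" for B
  proof -
    have "B \<subseteq> Idx n" "card B = 2 ^ n - r" using that unfolding Bs_def by auto
    then show ?thesis using card_Diff_subset[of B "Idx n"] finI card_Idx r_le
      by (metis diff_diff_cancel finite_subset)
  qed
  have irr: "\<forall>B \<in> Bs. irreducible_alg U n (YB B)"
  proof
    fix B assume B: "B \<in> Bs"
    show "irreducible_alg U n (YB B)" unfolding YB_def
      using irred_YB[of B n U] B cardC[OF B] assms(2,3) unfolding Bs_def by auto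
  qed
  have un: "Y = (\<Union>B \<in> Bs. YB B)"
  proof
    show "(\<Union>B \<in> Bs. YB B) \<subseteq> Y"
    proof
      fix f assume "f \<in> (\<Union>B \<in> Bs. YB B)"
      then obtain B where "B \<in> Bs" "f \<in> YB B" by blast
      then show "f \<in> Y" unfolding Y_def YB_def Bs_def sol_ortho by blast
    qed
    show "Y \<subseteq> (\<Union>B \<in> Bs. YB B)"
    proof
      fix f assume f: "f \<in> Y"
      note ff = f[unfolded Y_def sol_ortho]
      define S where "S = {\<alpha>\<in>Idx n. f \<alpha> \<noteq> {}}"
      have fsp: "f \<in> space U n" and fA: "\<forall>\<alpha>\<in>A. f \<alpha> = {}"
        and fd: "\<forall>\<alpha>\<in>Idx n. \<forall>\<beta>\<in>Idx n. \<alpha> \<noteq> \<beta> \<longrightarrow> f \<alpha> \<inter> f \<beta> = {}"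
        and fu: "(\<Union>\<alpha>\<in>Idx n. f \<alpha>) = U"
        using ff by blast+
      define pick where "pick = (\<lambda>\<alpha>. SOME u. u \<in> f \<alpha>)"
      have pk: "pick \<alpha> \<in> f \<alpha>" if "\<alpha> \<in> S" for \<alpha>
        using that unfolding S_def pick_def by (auto intro: someI_ex)
      have inj: "inj_on pick S"
      proof (rule inj_onI)
        fix \<alpha> \<beta> assume a: "\<alpha> \<in> S" "\<beta> \<in> S" and eq: "pick \<alpha> = pick \<beta>"
        have "pick \<alpha> \<in> f \<alpha> \<inter> f \<beta>" using pk[OF a(1)] pk[OF a(2)] eq by simp
        moreover have "\<alpha> \<in> Idx n" "\<beta> \<in> Idx n" using a unfolding S_def by auto
        ultimately show "\<alpha> = \<beta>" using fd by blast
      qed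
      have img: "pick ` S \<subseteq> U"
      proof
        fix x assume "x \<in> pick ` S"
        then obtain \<alpha> where a: "\<alpha> \<in> S" "x = pick \<alpha>" by blast
        then have "x \<in> f \<alpha>" using pk by simp
        moreover have "\<alpha> \<in> Idx n" using a unfolding S_def by auto
        ultimately show "x \<in> U" using fu by blast
      qed
      have cS: "card S \<le> r" using card_inj_on_le[OF inj img assms(2)] assms(3) by simp
      have SA: "S \<subseteq> Idx n - A" using fA unfolding S_def by auto
      have cIA: "card (Idx n - A) = 2 ^ n - card A"
        using card_Diff_subset[OF finA assms(5)] card_Idx by simp
      obtain C where C: "S \<subseteq> C" "C \<subseteq> Idx n - A" "card C = r"
        using exists_subset_between[OF cS _ SA] cIA assms(6) finI by (metis finite_Diff less_imp_le)
      define B where "B = Idx n - C"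
      have finC: "finite C" using C(2) finI finite_subset by blast
      have "card B = 2 ^ n - r"
      proof -
        have "C \<subseteq> Idx n" using C(2) by blast
        then show ?thesis unfolding B_def using card_Diff_subset[OF finC] card_Idx C(3) by simp
      qed
      then have BBs: "B \<in> Bs" unfolding Bs_def B_def using C(2) assms(5) by auto
      have "\<forall>\<alpha>\<in>B. f \<alpha> = {}"
      proof
        fix \<alpha> assume "\<alpha> \<in> B"
        then have "\<alpha> \<in> Idx n" "\<alpha> \<notin> S" using C(1) unfolding B_def by auto
        then show "f \<alpha> = {}" unfolding S_def by blast
      qed
      then have "f \<in> YB B" unfolding YB_def sol_ortho using fsp fd fu by blast
      then show "f \<in> (\<Union>B \<in> Bs. YB B)" using BBs by blast
    qed
  qed
  have nsub: "\<forall>B \<in> Bs. \<forall>B' \<in> Bs. B \<noteq> B' \<longrightarrow> \<not> YB B \<subseteq> YB B'"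
  proof (intro ballI impI)
    fix B B' assume B: "B \<in> Bs" and B': "B' \<in> Bs" and ne: "B \<noteq> B'"
    have "\<exists>\<alpha>. \<alpha> \<in> B' - B"
    proof (rule ccontr)
      assume "\<not> (\<exists>\<alpha>. \<alpha> \<in> B' - B)"
      then have "B' \<subseteq> B" by blast
      moreover have "finite B" using B finI unfolding Bs_def by (auto intro: finite_subset)
      moreover have "card B' = card B" using B B' unfolding Bs_def by simp
      ultimately have "B' = B" using card_subset_eq by blast
      then show False using ne by simp
    qed
    then obtain \<alpha> where a: "\<alpha> \<in> B'" "\<alpha> \<notin> B" by blast
    have aI: "\<alpha> \<in> Idx n" using a B' unfolding Bs_def by auto
    define f where "f = restrict (\<lambda>\<beta>. if \<beta> = \<alpha> then U else {}) (Idx n)"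
    have BI: "B \<subseteq> Idx n" using B unfolding Bs_def by auto
    have "f \<in> YB B" unfolding YB_def sol_ortho
      using aI a BI unfolding f_def space_def by auto
    moreover have "f \<notin> YB B'" unfolding YB_def sol_ortho
      using aI a Une unfolding f_def by auto
    ultimately show "\<not> YB B \<subseteq> YB B'" by blast
  qed
  have finBs: "finite Bs"
    by (rule finite_subset[of _ "Pow (Idx n)"]) (use finI in \<open>auto simp: Bs_def\<close>)
  have dec: "irred_decomp U n Y (YB ` Bs)"
    unfolding irred_decomp_def using finBs irr un nsub by auto
  have comp: "irreducible_components U n Y = YB ` Bs"
    unfolding irreducible_components_def
  proof (rule the_equality)
    show "irred_decomp U n Y (YB ` Bs)" by (fact dec)
    fix D assume "irred_decomp U n Y D"
    then show "D = YB ` Bs" using decomp_unique dec by blast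
  qed
  have injYB: "inj_on YB Bs"
  proof (rule inj_onI)
    fix B B' assume "B \<in> Bs" "B' \<in> Bs" "YB B = YB B'"
    then show "B = B'" using nsub by blast
  qed
  have "card Bs = card {C. C \<subseteq> Idx n - A \<and> card C = r}"
  proof (rule bij_betw_same_card[of "\<lambda>B. Idx n - B"])
    show "bij_betw (\<lambda>B. Idx n - B) Bs {C. C \<subseteq> Idx n - A \<and> card C = r}"
    proof (rule bij_betw_byWitness[of _ "\<lambda>C. Idx n - C"])
      show "\<forall>B\<in>Bs. Idx n - (Idx n - B) = B" unfolding Bs_def by auto
      show "\<forall>C\<in>{C. C \<subseteq> Idx n - A \<and> card C = r}. Idx n - (Idx n - C) = C" by auto
      show "(\<lambda>B. Idx n - B) ` Bs \<subseteq> {C. C \<subseteq> Idx n - A \<and> card C = r}"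
        using cardC unfolding Bs_def by auto
      show "(\<lambda>C. Idx n - C) ` {C. C \<subseteq> Idx n - A \<and> card C = r} \<subseteq> Bs"
      proof
        fix B assume "B \<in> (\<lambda>C. Idx n - C) ` {C. C \<subseteq> Idx n - A \<and> card C = r}"
        then obtain C where C: "C \<subseteq> Idx n - A" "card C = r" "B = Idx n - C" by blast
        have finC: "finite C" using C(1) finI finite_subset by blast
        have "card B = 2 ^ n - r"
        proof -
          have "C \<subseteq> Idx n" using C(1) by blast
          then show ?thesis using card_Diff_subset[OF finC] C card_Idx by simp
        qed
        then show "B \<in> Bs" unfolding Bs_def using C assms(5) by auto
      qed
    qed
  qed
  also have "\<dots> = card (Idx n - A) choose r" using n_subsets finI by blast
  also have "\<dots> = (2 ^ n - card A) choose r"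
    using card_Diff_subset[OF finA assms(5)] card_Idx by simp
  finally have "card Bs = (2 ^ n - card A) choose r" .
  then have "card (irreducible_components U n Y) = (2 ^ n - card A) choose r"
    using comp card_image[OF injYB] by simp
  then show ?thesis using un irr nsub comp by blast
qed

end
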